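(* Let $\mathbf{H}$ be a real symmetric $d\times d$ matrix and $\mathbf{H}(\omega)$ random symmetric matrices with $\mathbb{E}\,\mathbf{H}(\omega)=\mathbf{H}$, $\mathbb{E}\|\mathbf{H}(\omega)\|_2^2\le\sigma^2$, $\|\mathbf{H}(\omega)\|_2\le G_1$; let $\alpha(n)>0$ with $\sum\alpha(n)=\infty$, $\sum\alpha(n)^2<\infty$. Let $2\le\bar k\le d$ and let $\mathbf{v}_1,\dots,\mathbf{v}_{\bar k-1}$ be orthonormal eigenvectors of $\mathbf{H}$. Let $\mathbf{v}(0)$ be a unit vector orthogonal to $\mathbf{v}_1,\dots,\mathbf{v}_{\bar k-1}$ and define $$\hat{\mathbf{v}}(n+1)=\mathbf{v}(n)-\alpha(n)\Big(I-\mathbf{v}(n)\mathbf{v}(n)^\top-\sum_{i=1}^{\bar k-1}\mathbf{v}_i\mathbf{v}_i^\top\Big)\mathbf{H}(\omega(n))\mathbf{v}(n),\qquad \mathbf{v}(n+1)=\frac{\hat{\mathbf{v}}(n+1)}{\|\hat{\mathbf{v}}(n+1)\|_2},$$ with $\omega(n)$ independent fresh samples. Then, almost surely, every limit point $\mathbf{v}_\infty$ of $(\mathbf{v}(n))$ with $\mathbf{v}_\infty\notin\mathrm{span}\{\mathbf{v}_1,\dots,\mathbf{v}_{\bar k-1}\}$ lies in an eigenspace of $\mathbf{H}$, i.e. is an eigenvector of $\mathbf{H}$. *)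

theory Defs
  imports "HOL-Probability.Probability"
begin

definition outer :: "real^'d \<Rightarrow> real^'d \<Rightarrow> real^'d^'d" where
  "outer u w = (\<chi> i j. u $ i * w $ j)"

definition spec_norm :: "real^'d^'d \<Rightarrow> real" where
  "spec_norm A = onorm (\<lambda>x. A *v x)"

definition oja_step ::
  "real \<Rightarrow> (nat \<Rightarrow> real^'d) \<Rightarrow> nat \<Rightarrow> real^'d^'d \<Rightarrow> real^'d \<Rightarrow> real^'d" where
  "oja_step a vs kbar Hw v =
     (let vhat = v - a *\<^sub>R ((mat 1 - outer v v - (\<Sum>i\<in>{1..<kbar}. outer (vs i) (vs i))) ** Hw *v v)
      in (1 / norm vhat) *\<^sub>R vhat)"

(* the iterates v(n), driven by the sampled matrices Hseq n = H(omega(n)) *)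
fun oja_iter ::
  "(nat \<Rightarrow> real) \<Rightarrow> (nat \<Rightarrow> real^'d) \<Rightarrow> nat \<Rightarrow> real^'d \<Rightarrow> (nat \<Rightarrow> real^'d^'d) \<Rightarrow> nat \<Rightarrow> real^'d" where
  "oja_iter \<alpha> vs kbar v0 Hseq 0 = v0"
| "oja_iter \<alpha> vs kbar v0 Hseq (Suc n) =
     oja_step (\<alpha> n) vs kbar (Hseq n) (oja_iter \<alpha> vs kbar v0 Hseq n)"

definition limit_point :: "(nat \<Rightarrow> 'a::topological_space) \<Rightarrow> 'a \<Rightarrow> bool" where
  "limit_point X l \<longleftrightarrow> (\<exists>r. strict_mono r \<and> (X \<circ> r) \<longlonglongrightarrow> l)"

end

theory Submission
  imports Defs
begin



lemma outer_mv: "outer u w *v y = (w \<bullet> y) *\<^sub>R u"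
  by (simp add: vec_eq_iff outer_def matrix_vector_mult_def inner_vec_def sum_distrib_left mult_ac)

lemma sum_mv: "(\<Sum>i\<in>A. F i) *v (y::real^'n) = (\<Sum>i\<in>A. F i *v y)"
  by (simp add: vec_eq_iff matrix_vector_mult_def sum_component sum_distrib_right
     sum.swap[where A=A])

lemma Q_mv: "(mat 1 - outer v v - (\<Sum>i\<in>I. outer (vs i) (vs i))) *v y
   = y - (v \<bullet> y) *\<^sub>R v - (\<Sum>i\<in>I. (vs i \<bullet> y) *\<^sub>R vs i)"
  by (simp add: matrix_vector_mult_diff_rdistrib outer_mv sum_mv)

lemma sym_entry: "transpose A = A \<Longrightarrow> A $ i $ j = A $ j $ i"
  by (metis transpose_def vec_lambda_beta)

lemma dot_mv_sym: "transpose (A::real^'n^'n) = A \<Longrightarrow> x \<bullet> (A *v y) = (A *v x) \<bullet> y"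
  apply (simp add: inner_vec_def matrix_vector_mult_def sum_distrib_left sum_distrib_right)
  apply (subst sum.swap)
  apply (rule sum.cong, simp)
  apply (rule sum.cong, simp)
  apply (simp add: sym_entry)
  done

lemma real_key:
  fixes a n h F Fu G :: real
  assumes "a \<ge> 0" "n \<ge> 0" "h \<ge> 0" "\<bar>F\<bar> \<le> h" "\<bar>Fu\<bar> \<le> h * n^2" "\<bar>G\<bar> \<le> 2 * h * n"
  shows "(F - 2*a*G + a^2*Fu) / (1 + a^2*n^2) \<le> F - 2*a*G + 4*h*a^2*n^2"
proof -
  have D: "1 + a^2*n^2 > 0" by (simp add: add_pos_nonneg)
  have e1: "a^2*Fu \<le> a^2*(h*n^2)" using assms by (intro mult_left_mono) auto
  have e2: "F*(a^2*n^2) \<ge> -h*(a^2*n^2)" using assms by (intro mult_right_mono) auto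
  have e3: "a*G*(a^2*n^2) \<le> a*(2*h*n)*(a^2*n^2)" using assms by (intro mult_right_mono mult_left_mono) auto
  have e4: "0 \<le> 2*h*a^2*n^2*((1-a*n)^2 + a^2*n^2)" using assms by simp
  have "F - 2*a*G + a^2*Fu \<le> (F - 2*a*G + 4*h*a^2*n^2) * (1 + a^2*n^2)"
    using e1 e2 e3 e4 by (simp add: algebra_simps power2_eq_square)
  then show ?thesis using D by (simp add: divide_le_eq)
qed

lemma tele_bound:
  fixes v :: "nat \<Rightarrow> 'a::real_normed_vector"
  assumes step: "\<And>n. norm (v (Suc n) - v n) \<le> C * \<alpha> n"
  shows "norm (v (n0 + m) - v n0) \<le> C * (\<Sum>i\<in>{n0..<n0+m}. \<alpha> i)"
proof (induction m)
  case 0 then show ?case by simp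
next
  case (Suc m)
  have "norm (v (n0 + Suc m) - v n0) \<le> norm (v (Suc (n0 + m)) - v (n0+m)) + norm (v (n0 + m) - v n0)"
  proof -
    have "v (n0 + Suc m) - v n0 = (v (Suc (n0 + m)) - v (n0+m)) + (v (n0 + m) - v n0)" by simp
    then show ?thesis by (metis norm_triangle_ineq)
  qed
  also have "\<dots> \<le> C * \<alpha> (n0+m) + C * (\<Sum>i\<in>{n0..<n0+m}. \<alpha> i)" using step Suc by (intro add_mono) auto
  also have "\<dots> = C * (\<Sum>i\<in>{n0..<n0+Suc m}. \<alpha> i)" by (simp add: algebra_simps)
  finally show ?case .
qed

lemma det_limit:
  fixes v :: "nat \<Rightarrow> 'a::real_normed_vector" and g :: "'a \<Rightarrow> 'b::real_normed_vector"
  assumes step: "\<And>n. norm (v (Suc n) - v n) \<le> C * \<alpha> n" and Cpos: "C > 0"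
    and apos: "\<And>n. \<alpha> n \<ge> 0" and div: "\<not> summable \<alpha>"
    and sq: "summable (\<lambda>n. \<alpha> n * (norm (g (v n)))^2)"
    and cont: "isCont g l" and lp: "limit_point v l"
  shows "g l = 0"
proof (rule ccontr)
  assume gl: "g l \<noteq> 0"
  define e where "e = norm (g l) / 2"
  have e: "e > 0" using gl by (simp add: e_def)
  obtain \<delta> where \<delta>: "\<delta> > 0" "\<And>x'. dist x' l < \<delta> \<Longrightarrow> dist (g x') (g l) < e"
    using cont e unfolding continuous_at_eps_delta by blast
  have gbig: "norm (g x') > e" if "dist x' l < \<delta>" for x'
  proof -
    have "dist (g x') (g l) < e" using \<delta> that by blast
    moreover have "norm (g l) - norm (g x') \<le> dist (g x') (g l)"
      by (metis dist_norm norm_minus_commute norm_triangle_ineq2)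
    ultimately show ?thesis unfolding e_def by linarith
  qed
  define d where "d = \<delta> / 2"
  have d: "d > 0" using \<delta> by (simp add: d_def)
  define s where "s n = \<alpha> n * (norm (g (v n)))^2" for n
  have spos: "s n \<ge> 0" for n using apos by (simp add: s_def)
  have epos: "e^2 * d / C > 0" using e d Cpos by simp
  have sq': "summable s" using sq unfolding s_def .
  obtain N where N: "\<And>m n. m \<ge> N \<Longrightarrow> norm (sum s {m..<n}) < e^2 * d / C"
    using sq'[unfolded summable_Cauchy, rule_format, OF epos] by blast
  obtain r where r: "strict_mono r" "(v \<circ> r) \<longlonglongrightarrow> l" using lp unfolding limit_point_def by blast
  obtain J where J: "\<And>j. j \<ge> J \<Longrightarrow> dist ((v \<circ> r) j) l < d"
    using r(2) d unfolding lim_sequentially by blast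
  define n0 where "n0 = r (max J N)"
  have n0N: "n0 \<ge> N" unfolding n0_def using seq_suble[OF r(1), of "max J N"] by simp
  have vn0: "dist (v n0) l < d" unfolding n0_def using J[of "max J N"] by simp
  define P where "P K \<longleftrightarrow> d \<le> C * (\<Sum>i\<in>{n0..<K}. \<alpha> i)" for K
  have exP: "\<exists>K. P K"
  proof (rule ccontr)
    assume "\<not> (\<exists>K. P K)"
    then have lt: "C * (\<Sum>i\<in>{n0..<K}. \<alpha> i) < d" for K unfolding P_def using not_le by blast
    have "summable \<alpha>"
    proof (rule summableI_nonneg_bounded[of \<alpha> "(\<Sum>i<n0. \<alpha> i) + d / C"])
      fix n show "0 \<le> \<alpha> n" by (rule apos)
      show "sum \<alpha> {..<n} \<le> (\<Sum>i<n0. \<alpha> i) + d / C"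
      proof -
        have "sum \<alpha> {..<n} \<le> sum \<alpha> {..<max n n0}" by (intro sum_mono2) (auto simp: apos)
        also have "\<dots> = sum \<alpha> {0..<n0} + sum \<alpha> {n0..<max n n0}"
          by (simp add: atLeast0LessThan[symmetric] sum.atLeastLessThan_concat)
        also have "sum \<alpha> {n0..<max n n0} \<le> d / C" using lt[of "max n n0"] Cpos
          by (simp add: le_divide_eq mult.commute)
        finally show ?thesis by (simp add: atLeast0LessThan)
      qed
    qed
    with div show False by simp
  qed
  define K0 where "K0 = (LEAST K. P K)"
  have PK0: "P K0" unfolding K0_def using exP by (metis LeastI)
  have nPk: "\<not> P k" if "k < K0" for k using that unfolding K0_def by (rule not_less_Least)
  have "\<not> P n0" unfolding P_def using d by simp
  then have "n0 \<noteq> K0" using PK0 by auto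
  have K0ge: "K0 \<ge> n0"
  proof (rule ccontr)
    assume "\<not> K0 \<ge> n0" then have "{n0..<K0} = {}" by auto
    then show False using PK0 d unfolding P_def by simp
  qed
  have sk: "s k \<ge> \<alpha> k * e^2" if k: "n0 \<le> k" "k < K0" for k
  proof -
    obtain m where m: "k = n0 + m" using k by (metis le_add_diff_inverse)
    have "norm (v k - v n0) \<le> C * (\<Sum>i\<in>{n0..<k}. \<alpha> i)" using tele_bound[of v C \<alpha> n0 m, OF step] m by simp
    also have "\<dots> < d" using nPk[OF k(2)] unfolding P_def by simp
    finally have "dist (v k) (v n0) < d" by (simp add: dist_norm)
    then have "dist (v k) l < \<delta>" using vn0 dist_triangle[of "v k" l "v n0"] unfolding d_def by linarith
    then have "norm (g (v k)) > e" by (rule gbig)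
    then have "(norm (g (v k)))^2 \<ge> e^2" using e by (intro power_mono) auto
    then show ?thesis unfolding s_def using apos[of k] by (intro mult_left_mono) auto
  qed
  have "e^2 * d / C \<le> e^2 * (\<Sum>i\<in>{n0..<K0}. \<alpha> i)"
    using PK0 Cpos e unfolding P_def by (simp add: divide_le_eq mult.commute mult.left_commute)
  also have "\<dots> = (\<Sum>i\<in>{n0..<K0}. \<alpha> i * e^2)" by (simp add: sum_distrib_right mult.commute)
  also have "\<dots> \<le> sum s {n0..<K0}" by (intro sum_mono sk) auto
  also have "\<dots> < e^2 * d / C" using N[OF n0N, of K0] spos by (simp add: sum_nonneg)
  finally show False by simp
qed

locale ojactx =
  fixes H :: "real^'d^'d" and vs :: "nat \<Rightarrow> real^'d" and kbar :: nat and lam :: "nat \<Rightarrow> real"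
  assumes H_sym: "transpose H = H"
    and vs_orth: "\<And>i j. i \<in> {1..<kbar} \<Longrightarrow> j \<in> {1..<kbar} \<Longrightarrow>
                     vs i \<bullet> vs j = (if i = j then 1 else 0)"
    and vs_eig: "\<And>i. i \<in> {1..<kbar} \<Longrightarrow> H *v vs i = lam i *\<^sub>R vs i"
begin

definition "Qm v = mat 1 - outer v v - (\<Sum>i\<in>{1..<kbar}. outer (vs i) (vs i))"
definition "orth v \<longleftrightarrow> (\<forall>i\<in>{1..<kbar}. v \<bullet> vs i = 0)"
definition "ff v = v \<bullet> (H *v v)"
definition "gg v = H *v v - ff v *\<^sub>R v"

lemma Qm_mv: "Qm v *v y = y - (v \<bullet> y) *\<^sub>R v - (\<Sum>i\<in>{1..<kbar}. (vs i \<bullet> y) *\<^sub>R vs i)"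
  unfolding Qm_def by (rule Q_mv)

lemma vs_perp_Q:
  assumes "orth v" "j \<in> {1..<kbar}"
  shows "vs j \<bullet> (Qm v *v y) = 0"
proof -
  have "vs j \<bullet> (\<Sum>i\<in>{1..<kbar}. (vs i \<bullet> y) *\<^sub>R vs i) = (\<Sum>i\<in>{1..<kbar}. (vs i \<bullet> y) * (vs j \<bullet> vs i))"
    by (simp add: inner_sum_right)
  also have "\<dots> = (\<Sum>i\<in>{1..<kbar}. if i = j then vs j \<bullet> y else 0)"
    by (rule sum.cong) (use assms vs_orth in auto)
  also have "\<dots> = vs j \<bullet> y" using assms by simp
  finally have 1: "vs j \<bullet> (\<Sum>i\<in>{1..<kbar}. (vs i \<bullet> y) *\<^sub>R vs i) = vs j \<bullet> y" .
  have "vs j \<bullet> v = 0" using assms unfolding orth_def by (simp add: inner_commute)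
  have "vs j \<bullet> (Qm v *v y) = vs j \<bullet> y - (v \<bullet> y) * (vs j \<bullet> v) - vs j \<bullet> (\<Sum>i\<in>{1..<kbar}. (vs i \<bullet> y) *\<^sub>R vs i)"
    by (simp only: Qm_mv inner_diff_right inner_scaleR_right)
  then show ?thesis using 1 \<open>vs j \<bullet> v = 0\<close> by simp
qed

lemma v_perp_Q:
  assumes "orth v" "norm v = 1"
  shows "v \<bullet> (Qm v *v y) = 0"
proof -
  have "v \<bullet> (\<Sum>i\<in>{1..<kbar}. (vs i \<bullet> y) *\<^sub>R vs i) = 0"
    using assms unfolding orth_def by (simp add: inner_sum_right)
  moreover have "v \<bullet> v = 1" using assms by (simp add: dot_square_norm)
  ultimately show ?thesis by (simp add: Qm_mv inner_diff_right)
qed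

lemma perp_Q:
  assumes "orth w" "w \<bullet> v = 0"
  shows "w \<bullet> (Qm v *v y) = w \<bullet> y"
proof -
  have "w \<bullet> (\<Sum>i\<in>{1..<kbar}. (vs i \<bullet> y) *\<^sub>R vs i) = 0"
    using assms unfolding orth_def by (simp add: inner_sum_right)
  then show ?thesis using assms by (simp add: Qm_mv inner_diff_right)
qed

lemma orth_H: assumes "orth v" shows "orth (H *v v)"
  unfolding orth_def
proof
  fix i assume i: "i \<in> {1..<kbar}"
  have "(H *v v) \<bullet> vs i = v \<bullet> (H *v vs i)" using dot_mv_sym[OF H_sym] by (simp add: inner_commute)
  also have "\<dots> = 0" using vs_eig[OF i] assms i by (simp add: orth_def)
  finally show "(H *v v) \<bullet> vs i = 0" .
qed

lemma orth_add: "orth v \<Longrightarrow> orth w \<Longrightarrow> orth (a *\<^sub>R v + b *\<^sub>R w)"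
  by (simp add: orth_def inner_add_left)

lemma orth_diff: "orth v \<Longrightarrow> orth w \<Longrightarrow> orth (v - w)"
  by (simp add: orth_def inner_diff_left)

lemma orth_scale: "orth v \<Longrightarrow> orth (a *\<^sub>R v)"
  by (simp add: orth_def)

lemma orth_gg: "orth v \<Longrightarrow> orth (gg v)"
  unfolding gg_def by (intro orth_diff orth_H orth_scale)

lemma gg_perp: assumes "norm v = 1" shows "gg v \<bullet> v = 0"
proof -
  have "v \<bullet> v = 1" using assms by (simp add: dot_square_norm)
  then have "v \<bullet> gg v = 0" by (simp add: gg_def ff_def inner_diff_right)
  then show ?thesis by (simp add: inner_commute)
qed

lemma orth_Q: "orth v \<Longrightarrow> orth (Qm v *v y)"
  using vs_perp_Q by (simp add: orth_def inner_commute)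

lemma vs_norm: "i \<in> {1..<kbar} \<Longrightarrow> norm (vs i) = 1"
  using vs_orth[of i i] by (simp add: norm_eq_sqrt_inner)

lemma Qm_bound: "norm v = 1 \<Longrightarrow> norm (Qm v *v y) \<le> (2 + real (card {1..<kbar})) * norm y"
proof -
  assume v: "norm v = 1"
  have s: "norm (\<Sum>i\<in>{1..<kbar}. (vs i \<bullet> y) *\<^sub>R vs i) \<le> (\<Sum>i\<in>{1..<kbar}. norm y)"
  proof -
    have "norm (\<Sum>i\<in>{1..<kbar}. (vs i \<bullet> y) *\<^sub>R vs i) \<le> (\<Sum>i\<in>{1..<kbar}. norm ((vs i \<bullet> y) *\<^sub>R vs i))"
      by (rule norm_sum)
    also have "\<dots> \<le> (\<Sum>i\<in>{1..<kbar}. norm y)"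
    proof (rule sum_mono)
      fix i assume i: "i \<in> {1..<kbar}"
      have "norm ((vs i \<bullet> y) *\<^sub>R vs i) = \<bar>vs i \<bullet> y\<bar>" using vs_norm[OF i] by simp
      also have "\<dots> \<le> norm (vs i) * norm y" by (rule Cauchy_Schwarz_ineq2)
      finally show "norm ((vs i \<bullet> y) *\<^sub>R vs i) \<le> norm y" using vs_norm[OF i] by simp
    qed
    finally show ?thesis .
  qed
  have t: "norm ((v \<bullet> y) *\<^sub>R v) \<le> norm y" using v Cauchy_Schwarz_ineq2[of v y] by simp
  have "norm (Qm v *v y) \<le> norm (y - (v \<bullet> y) *\<^sub>R v) + norm (\<Sum>i\<in>{1..<kbar}. (vs i \<bullet> y) *\<^sub>R vs i)"
    unfolding Qm_mv by (rule norm_triangle_ineq4)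
  also have "\<dots> \<le> norm y + norm ((v \<bullet> y) *\<^sub>R v) + (\<Sum>i\<in>{1..<kbar}. norm y)"
    using s norm_triangle_ineq4[of y "(v \<bullet> y) *\<^sub>R v"] by linarith
  also have "\<dots> \<le> (2 + real (card {1..<kbar})) * norm y" using t by (simp add: algebra_simps)
  finally show ?thesis .
qed

lemma mv_bound: "norm (A *v x) \<le> spec_norm A * norm x"
  unfolding spec_norm_def by (rule onorm[OF matrix_vector_mul_bounded_linear])

lemma spec_norm_nonneg: "spec_norm A \<ge> 0"
  unfolding spec_norm_def by (rule onorm_pos_le[OF matrix_vector_mul_bounded_linear])

lemma oja_step_eq: "oja_step a vs kbar Hw v = (1 / norm (v - a *\<^sub>R (Qm v *v (Hw *v v)))) *\<^sub>R (v - a *\<^sub>R (Qm v *v (Hw *v v)))"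
  unfolding oja_step_def Qm_def Let_def by (simp add: matrix_vector_mul_assoc)

lemma ff_scale: "ff (c *\<^sub>R x) = c^2 * ff x"
  by (simp add: ff_def matrix_vector_mult_scaleR power2_eq_square)

lemma ff_bound: "\<bar>ff x\<bar> \<le> spec_norm H * (norm x)^2"
proof -
  have "\<bar>ff x\<bar> \<le> norm x * norm (H *v x)" unfolding ff_def by (rule Cauchy_Schwarz_ineq2)
  also have "\<dots> \<le> norm x * (spec_norm H * norm x)" by (intro mult_left_mono mv_bound) auto
  finally show ?thesis by (simp add: power2_eq_square mult_ac)
qed

lemma gg_bound: "norm v = 1 \<Longrightarrow> norm (gg v) \<le> 2 * spec_norm H"
proof -
  assume v: "norm v = 1"
  have "norm (gg v) \<le> norm (H *v v) + norm (ff v *\<^sub>R v)" unfolding gg_def by (rule norm_triangle_ineq4)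
  also have "\<dots> \<le> spec_norm H + spec_norm H" using mv_bound[of H v] ff_bound[of v] v by simp
  finally show ?thesis by simp
qed

lemma step_facts:
  fixes a :: real and Hw :: "real^'d^'d"
  assumes v: "norm v = 1" "orth v" and a: "a \<ge> 0"
  defines "u \<equiv> Qm v *v (Hw *v v)"
  shows "norm (oja_step a vs kbar Hw v) = 1" "orth (oja_step a vs kbar Hw v)"
    "norm (oja_step a vs kbar Hw v - v) \<le> 2 * a * norm u"
    "ff (oja_step a vs kbar Hw v) \<le> ff v - 2 * a * (gg v \<bullet> u) + 4 * spec_norm H * a^2 * (norm u)^2"
    "gg v \<bullet> u = gg v \<bullet> (Hw *v v)"
proof -
  define vh where "vh = v - a *\<^sub>R u"
  have st: "oja_step a vs kbar Hw v = (1 / norm vh) *\<^sub>R vh" unfolding oja_step_eq vh_def u_def ..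
  have vu: "v \<bullet> u = 0" unfolding u_def by (rule v_perp_Q[OF v(2,1)])
  have ou: "orth u" unfolding u_def by (rule orth_Q[OF v(2)])
  have vv: "v \<bullet> v = 1" using v by (simp add: dot_square_norm)
  have nvh2: "(norm vh)^2 = 1 + a^2 * (norm u)^2"
    unfolding vh_def dot_square_norm[symmetric]
    by (simp add: inner_diff_left inner_diff_right vu vv inner_commute[of u v] power2_eq_square)
  have nvh1: "norm vh \<ge> 1"
  proof -
    have "1 \<le> (norm vh)^2" using nvh2 by simp
    then show ?thesis using power2_le_imp_le[of 1 "norm vh"] by simp
  qed
  then have nz: "norm vh \<noteq> 0" by auto
  show "norm (oja_step a vs kbar Hw v) = 1" using nz by (simp add: st)
  show "orth (oja_step a vs kbar Hw v)" unfolding st vh_def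
    by (intro orth_scale orth_diff v ou)
  have nvh_up: "norm vh \<le> 1 + a * norm u"
    unfolding vh_def using norm_triangle_ineq4[of v "a *\<^sub>R u"] v a by simp
  have "oja_step a vs kbar Hw v - v = (1 / norm vh) *\<^sub>R (vh - v) + (1 / norm vh - 1) *\<^sub>R v"
    by (simp add: st algebra_simps)
  then have "norm (oja_step a vs kbar Hw v - v) \<le> norm ((1 / norm vh) *\<^sub>R (vh - v)) + norm ((1 / norm vh - 1) *\<^sub>R v)"
    by (metis norm_triangle_ineq)
  also have "norm ((1 / norm vh) *\<^sub>R (vh - v)) = (1 / norm vh) * (a * norm u)"
    unfolding vh_def using a by simp
  also have "\<dots> \<le> a * norm u" using nvh1 a by (intro mult_left_le_one_le) (auto simp: divide_le_eq)
  also have "norm ((1 / norm vh - 1) *\<^sub>R v) = 1 - 1 / norm vh"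
  proof -
    have le1: "1 / norm vh \<le> 1" using nvh1 by (simp add: divide_le_eq)
    have "norm ((1 / norm vh - 1) *\<^sub>R v) = \<bar>1 / norm vh - 1\<bar>" using v by simp
    also have "\<dots> = 1 - 1 / norm vh" using le1 by linarith
    finally show ?thesis .
  qed
  also have "\<dots> \<le> a * norm u"
  proof -
    have e: "1 - 1 / norm vh = (norm vh - 1) / norm vh" using nz by (simp add: field_simps)
    have "(norm vh - 1) * 1 \<le> (norm vh - 1) * norm vh" using nvh1 by (intro mult_left_mono) auto
    then have "(norm vh - 1) / norm vh \<le> norm vh - 1" using nvh1 nz by (simp add: divide_le_eq)
    then have "1 - 1 / norm vh \<le> norm vh - 1" using e by simp
    then show ?thesis using nvh_up by linarith
  qed
  finally show "norm (oja_step a vs kbar Hw v - v) \<le> 2 * a * norm u" by linarith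
  have og: "orth (gg v)" by (rule orth_gg[OF v(2)])
  have gv: "gg v \<bullet> v = 0" by (rule gg_perp[OF v(1)])
  show gu: "gg v \<bullet> u = gg v \<bullet> (Hw *v v)" unfolding u_def by (rule perp_Q[OF og gv])
  have Hvu: "(H *v v) \<bullet> u = gg v \<bullet> u"
  proof -
    have "H *v v = gg v + ff v *\<^sub>R v" by (simp add: gg_def)
    then show ?thesis by (simp add: inner_add_left vu)
  qed
  have ffvh: "ff vh = ff v - 2 * a * (gg v \<bullet> u) + a^2 * ff u"
  proof -
    have "ff vh = v \<bullet> (H *v v) - a * (v \<bullet> (H *v u)) - a * (u \<bullet> (H *v v)) + a^2 * (u \<bullet> (H *v u))"
      unfolding ff_def vh_def
      by (simp only: matrix_vector_mult_diff_distrib matrix_vector_mult_scaleR inner_diff_left inner_diff_right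
          inner_scaleR_left inner_scaleR_right) (simp add: power2_eq_square algebra_simps)
    also have "v \<bullet> (H *v u) = (H *v v) \<bullet> u" by (rule dot_mv_sym[OF H_sym])
    also have "u \<bullet> (H *v v) = (H *v v) \<bullet> u" by (simp add: inner_commute)
    finally show ?thesis unfolding Hvu ff_def by simp
  qed
  have ffst: "ff (oja_step a vs kbar Hw v) = ff vh / (1 + a^2 * (norm u)^2)"
    unfolding st ff_scale nvh2[symmetric] by (simp add: power_divide)
  have h0: "spec_norm H \<ge> 0" by (rule spec_norm_nonneg)
  have b1: "\<bar>ff v\<bar> \<le> spec_norm H" using ff_bound[of v] v by simp
  have b2: "\<bar>ff u\<bar> \<le> spec_norm H * (norm u)^2" by (rule ff_bound)
  have b3: "\<bar>gg v \<bullet> u\<bar> \<le> 2 * spec_norm H * norm u"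
  proof -
    have "\<bar>gg v \<bullet> u\<bar> \<le> norm (gg v) * norm u" by (rule Cauchy_Schwarz_ineq2)
    also have "\<dots> \<le> 2 * spec_norm H * norm u" by (intro mult_right_mono gg_bound v) auto
    finally show ?thesis .
  qed
  show "ff (oja_step a vs kbar Hw v) \<le> ff v - 2 * a * (gg v \<bullet> u) + 4 * spec_norm H * a^2 * (norm u)^2"
    unfolding ffst ffvh by (rule real_key[OF a norm_ge_zero h0 b1 b2 b3])
qed

end


lemma bm_nth[measurable (raw)]:
  fixes f :: "'a \<Rightarrow> 'b::euclidean_space ^ 'n"
  shows "f \<in> borel_measurable M \<Longrightarrow> (\<lambda>x. f x $ i) \<in> borel_measurable M"
  by (rule measurable_compose[of f M borel]) (auto intro!: borel_measurable_continuous_onI continuous_on_component continuous_on_id)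

lemma bm_vec:
  fixes f :: "'a \<Rightarrow> 'b::euclidean_space ^ 'n"
  assumes "\<And>i. (\<lambda>x. f x $ i) \<in> borel_measurable M"
  shows "f \<in> borel_measurable M"
proof (subst borel_measurable_euclidean_space, safe)
  fix b :: "'b^'n" assume "b \<in> Basis"
  then obtain i u where iu: "u \<in> Basis" "b = axis i u" by (auto simp: Basis_vec_def)
  have "(\<lambda>x. f x $ i \<bullet> u) \<in> borel_measurable M" using assms[of i] by measurable
  then show "(\<lambda>x. f x \<bullet> b) \<in> borel_measurable M" using iu by (simp add: inner_axis)
qed

lemma bm_mv[measurable (raw)]:
  fixes f :: "'a \<Rightarrow> real ^ 'n ^ 'm" and g :: "'a \<Rightarrow> real ^ 'n"
  assumes [measurable]: "f \<in> borel_measurable M" "g \<in> borel_measurable M"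
  shows "(\<lambda>x. f x *v g x) \<in> borel_measurable M"
proof (rule bm_vec)
  fix i
  have "(\<lambda>x. (f x *v g x) $ i) = (\<lambda>x. \<Sum>j\<in>UNIV. f x $ i $ j * g x $ j)"
    by (simp add: matrix_vector_mult_def)
  also have "\<dots> \<in> borel_measurable M" by measurable
  finally show "(\<lambda>x. (f x *v g x) $ i) \<in> borel_measurable M" .
qed

lemma bm_cmv[measurable (raw)]:
  fixes g :: "'a \<Rightarrow> real ^ 'n" and A :: "real^'n^'m"
  shows "g \<in> borel_measurable M \<Longrightarrow> (\<lambda>x. A *v g x) \<in> borel_measurable M"
  by (rule bm_mv) auto

context ojactx begin

lemma bm_step[measurable (raw)]:
  fixes f :: "'a \<Rightarrow> real ^ 'd ^ 'd" and g :: "'a \<Rightarrow> real ^ 'd"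
  assumes [measurable]: "f \<in> borel_measurable M" "g \<in> borel_measurable M"
  shows "(\<lambda>x. oja_step a vs kbar (f x) (g x)) \<in> borel_measurable M"
  unfolding oja_step_eq Qm_mv by measurable

lemma bm_ff[measurable (raw)]: assumes [measurable]: "g \<in> borel_measurable M" shows "(\<lambda>x. ff (g x)) \<in> borel_measurable M"
  unfolding ff_def by measurable

lemma bm_gg[measurable (raw)]: assumes [measurable]: "g \<in> borel_measurable M" shows "(\<lambda>x. gg (g x)) \<in> borel_measurable M"
  unfolding gg_def ff_def by measurable

end

lemma oja_iter_local:
  "(\<And>m. m < n \<Longrightarrow> F m = G m) \<Longrightarrow> oja_iter \<alpha> vs kbar v0 F n = oja_iter \<alpha> vs kbar v0 G n"
  by (induction n) auto



locale ojaprob = ojactx H vs kbar lam + M?: prob_space M + S?: prob_space S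
  for H :: "real^'d^'d" and vs kbar lam and M :: "'a measure" and S :: "'w measure" +
  fixes Hs :: "'w \<Rightarrow> real^'d^'d" and W :: "nat \<Rightarrow> 'a \<Rightarrow> 'w" and G1 :: real
    and \<alpha> :: "nat \<Rightarrow> real" and v0 :: "real^'d"
  assumes Hs_meas[measurable]: "Hs \<in> borel_measurable S"
    and Hs_mean: "has_bochner_integral S Hs H"
    and Hs_bdd: "\<And>w. w \<in> space S \<Longrightarrow> spec_norm (Hs w) \<le> G1"
    and W_meas[measurable]: "\<And>n. W n \<in> measurable M S"
    and W_distr: "\<And>n. distr M S (W n) = S"
    and W_indep: "prob_space.indep_vars M (\<lambda>_. S) W UNIV"
    and \<alpha>_pos: "\<And>n. \<alpha> n > 0"
    and v0_unit: "norm v0 = 1"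
    and v0_orth: "\<And>i. i \<in> {1..<kbar} \<Longrightarrow> v0 \<bullet> vs i = 0"
begin

definition "vv n x = oja_iter \<alpha> vs kbar v0 (\<lambda>m. Hs (W m x)) n"
definition "VV n ys = oja_iter \<alpha> vs kbar v0 (\<lambda>m. Hs (ys m)) n"

lemma vv_unit_orth: "norm (vv n x) = 1 \<and> orth (vv n x)"
proof (induction n)
  case 0 then show ?case using v0_unit v0_orth by (simp add: vv_def orth_def)
next
  case (Suc n)
  have a: "\<alpha> n \<ge> 0" using \<alpha>_pos[of n] by simp
  have "vv (Suc n) x = oja_step (\<alpha> n) vs kbar (Hs (W n x)) (vv n x)" by (simp add: vv_def)
  then show ?case using step_facts(1,2)[OF conjunct1[OF Suc] conjunct2[OF Suc] a] by simp
qed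

lemma VV_meas: "{..<n} \<subseteq> I \<Longrightarrow> VV n \<in> borel_measurable (PiM I (\<lambda>_. S))"
proof (induction n)
  case 0 then show ?case by (simp add: VV_def)
next
  case (Suc n)
  then have nI: "n \<in> I" by auto
  have IH[measurable]: "VV n \<in> borel_measurable (PiM I (\<lambda>_. S))" 
  proof -
    have "{..<n} \<subseteq> I" using Suc.prems by auto
    then show ?thesis by (rule Suc.IH)
  qed
  have [measurable]: "(\<lambda>ys. Hs (ys n)) \<in> borel_measurable (PiM I (\<lambda>_. S))"
    by (rule measurable_compose[OF measurable_component_singleton[OF nI] Hs_meas])
  have "VV (Suc n) = (\<lambda>ys. oja_step (\<alpha> n) vs kbar (Hs (ys n)) (VV n ys))"
    by (simp add: VV_def fun_eq_iff)
  also have "\<dots> \<in> borel_measurable (PiM I (\<lambda>_. S))" by measurable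
  finally show ?case .
qed

lemma vv_eq: "vv n x = VV n (restrict (\<lambda>i. W i x) {..<n})"
  unfolding vv_def VV_def by (rule oja_iter_local) auto

lemma restr_meas: "(\<lambda>x. restrict (\<lambda>i. W i x) J) \<in> measurable M (PiM J (\<lambda>_. S))"
  by (rule measurable_restrict) simp

lemma vv_meas[measurable]: "vv n \<in> borel_measurable M"
proof -
  have "(\<lambda>x. VV n (restrict (\<lambda>i. W i x) {..<n})) \<in> borel_measurable M"
    by (rule measurable_compose[OF restr_meas VV_meas]) simp
  then show ?thesis by (simp add: vv_eq[abs_def])
qed

lemma HsW_meas[measurable]: "(\<lambda>x. Hs (W k x)) \<in> borel_measurable M"
  by measurable

lemma entry_bound: "\<bar>A $ i $ j\<bar> \<le> spec_norm A"
proof -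
  have "A $ i $ j = (A *v axis j 1) $ i" by (simp add: matrix_vector_mult_def axis_def if_distrib cong: if_cong)
  then have "\<bar>A $ i $ j\<bar> \<le> norm (A *v axis j 1)" by (metis component_le_norm_cart)
  also have "\<dots> \<le> spec_norm A * norm (axis j (1::real))" by (rule mv_bound)
  finally show ?thesis by simp
qed

lemma Hs_entry_bound: "w \<in> space S \<Longrightarrow> \<bar>Hs w $ i $ j\<bar> \<le> G1"
  using entry_bound[of "Hs w" i j] Hs_bdd[of w] by simp

lemma Hs_entry_int: "(\<integral>w. Hs w $ i $ j \<partial>S) = H $ i $ j"
proof -
  have bl: "bounded_linear (\<lambda>A::real^'d^'d. A $ i $ j)"
    by (rule bounded_linear_compose[of "\<lambda>x::real^'d. x $ j" "\<lambda>A::real^'d^'d. A $ i", OF bounded_linear_vec_nth bounded_linear_vec_nth])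
  show ?thesis using has_bochner_integral_bounded_linear[OF bl Hs_mean]
    by (rule has_bochner_integral_integral_eq)
qed

lemma HsW_entry_int: "(\<integral>x. Hs (W k x) $ i $ j \<partial>M) = H $ i $ j"
proof -
  have "(\<integral>x. Hs (W k x) $ i $ j \<partial>M) = integral\<^sup>L (distr M S (W k)) (\<lambda>w. Hs w $ i $ j)"
    by (rule integral_distr[symmetric]) simp_all
  then show ?thesis using W_distr Hs_entry_int by simp
qed

lemma key_indep:
  assumes c[measurable]: "c \<in> borel_measurable borel" and B: "\<And>x. \<bar>c (vv k x)\<bar> \<le> B"
  shows "(\<integral>x. c (vv k x) * Hs (W k x) $ i $ j \<partial>M) = (\<integral>x. c (vv k x) \<partial>M) * H $ i $ j"
    and "integrable M (\<lambda>x. c (vv k x) * Hs (W k x) $ i $ j)"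
proof -
  have ind: "M.indep_var (PiM {..<k} (\<lambda>_. S)) (\<lambda>x. restrict (\<lambda>i. W i x) {..<k})
                       (PiM {k} (\<lambda>_. S)) (\<lambda>x. restrict (\<lambda>i. W i x) {k})"
    by (rule M.indep_var_restrict[OF W_indep]) auto
  have m1: "(\<lambda>ys. c (VV k ys)) \<in> borel_measurable (PiM {..<k} (\<lambda>_. S))"
    using VV_meas[of k "{..<k}"] by measurable
  have m2: "(\<lambda>ys. Hs (ys k) $ i $ j) \<in> borel_measurable (PiM {k} (\<lambda>_. S))"
  proof -
    have [measurable]: "(\<lambda>ys. Hs (ys k)) \<in> borel_measurable (PiM {k} (\<lambda>_. S))"
      by (rule measurable_compose[OF measurable_component_singleton[of k "{k}" "\<lambda>_. S"] Hs_meas]) simp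
    show ?thesis by measurable
  qed
  have "M.indep_var borel ((\<lambda>ys. c (VV k ys)) \<circ> (\<lambda>x. restrict (\<lambda>i. W i x) {..<k}))
                   borel ((\<lambda>ys. Hs (ys k) $ i $ j) \<circ> (\<lambda>x. restrict (\<lambda>i. W i x) {k}))"
    by (rule M.indep_var_compose[OF ind m1 m2])
  also have "((\<lambda>ys. c (VV k ys)) \<circ> (\<lambda>x. restrict (\<lambda>i. W i x) {..<k})) = (\<lambda>x. c (vv k x))"
    by (simp add: fun_eq_iff vv_eq)
  also have "((\<lambda>ys. Hs (ys k) $ i $ j) \<circ> (\<lambda>x. restrict (\<lambda>i. W i x) {k})) = (\<lambda>x. Hs (W k x) $ i $ j)"
    by (simp add: fun_eq_iff)
  finally have iv: "M.indep_var borel (\<lambda>x. c (vv k x)) borel (\<lambda>x. Hs (W k x) $ i $ j)" .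
  have i1: "integrable M (\<lambda>x. c (vv k x))"
    by (rule M.integrable_const_bound[where B=B]) (auto simp: B)
  have i2: "integrable M (\<lambda>x. Hs (W k x) $ i $ j)"
    by (rule M.integrable_const_bound[where B=G1])
       (auto intro!: AE_I2 Hs_entry_bound measurable_space[OF W_meas])
  show "(\<integral>x. c (vv k x) * Hs (W k x) $ i $ j \<partial>M) = (\<integral>x. c (vv k x) \<partial>M) * H $ i $ j"
    using M.indep_var_lebesgue_integral[OF iv i1 i2] HsW_entry_int by simp
  show "integrable M (\<lambda>x. c (vv k x) * Hs (W k x) $ i $ j)"
    by (rule M.indep_var_integrable[OF iv i1 i2])
qed

end

context ojaprob begin

lemma G1_nonneg: "G1 \<ge> 0"
proof -
  obtain w where "w \<in> space S" using S.not_empty by blast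
  then show ?thesis using Hs_bdd[of w] spec_norm_nonneg[of "Hs w"] by linarith
qed

lemma bint: "f \<in> borel_measurable M \<Longrightarrow> (\<And>x. x \<in> space M \<Longrightarrow> \<bar>f x\<bar> \<le> B) \<Longrightarrow> integrable M f"
  for f :: "'a \<Rightarrow> real"
  by (rule M.integrable_const_bound[where B=B]) (auto intro!: AE_I2)

definition "Z k x = gg (vv k x) \<bullet> (Hs (W k x) *v vv k x)"

lemma Z_meas[measurable]: "Z k \<in> borel_measurable M"
  unfolding Z_def[abs_def] by measurable

lemma gg_H: "norm v = 1 \<Longrightarrow> gg v \<bullet> (H *v v) = (norm (gg v))^2"
proof -
  assume v: "norm v = 1"
  have "H *v v = gg v + ff v *\<^sub>R v" by (simp add: gg_def)
  then have "gg v \<bullet> (H *v v) = gg v \<bullet> gg v + ff v * (gg v \<bullet> v)" by (simp add: inner_add_right)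
  then show ?thesis using gg_perp[OF v] by (simp add: dot_square_norm)
qed

lemma Z_expand: "Z k x = (\<Sum>i\<in>UNIV. \<Sum>j\<in>UNIV. (gg (vv k x) $ i * vv k x $ j) * Hs (W k x) $ i $ j)"
  unfolding Z_def by (simp add: inner_vec_def matrix_vector_mult_def sum_distrib_left mult_ac)

lemma EZ: "integrable M (Z k) \<and> (\<integral>x. Z k x \<partial>M) = (\<integral>x. (norm (gg (vv k x)))^2 \<partial>M)"
proof -
  define c where "c i j v = gg v $ i * v $ j" for i j and v :: "real^'d"
  have cm: "c i j \<in> borel_measurable borel" for i j unfolding c_def[abs_def] by measurable
  have cb: "\<bar>c i j (vv k x)\<bar> \<le> 2 * spec_norm H" for i j x
  proof -
    have u: "norm (vv k x) = 1" using vv_unit_orth by blast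
    have "\<bar>gg (vv k x) $ i\<bar> \<le> 2 * spec_norm H"
      using component_le_norm_cart[of "gg (vv k x)" i] gg_bound[OF u] by linarith
    moreover have "\<bar>vv k x $ j\<bar> \<le> 1" using component_le_norm_cart[of "vv k x" j] u by simp
    ultimately have "\<bar>gg (vv k x) $ i\<bar> * \<bar>vv k x $ j\<bar> \<le> 2 * spec_norm H * 1"
      by (intro mult_mono) (auto simp: spec_norm_nonneg)
    then show ?thesis by (simp add: c_def abs_mult)
  qed
  note KI = key_indep[OF cm cb]
  have Zc: "Z k = (\<lambda>x. \<Sum>i\<in>UNIV. \<Sum>j\<in>UNIV. c i j (vv k x) * Hs (W k x) $ i $ j)"
    by (simp add: fun_eq_iff Z_expand c_def)
  have intc: "integrable M (\<lambda>x. c i j (vv k x))" for i j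
    by (rule bint[OF _ cb]) (use cm in measurable)
  have intZ: "integrable M (Z k)" unfolding Zc by (intro Bochner_Integration.integrable_sum KI(2))
  have "(\<integral>x. Z k x \<partial>M) = (\<Sum>i\<in>UNIV. \<Sum>j\<in>UNIV. (\<integral>x. c i j (vv k x) \<partial>M) * H $ i $ j)"
    unfolding Zc by (simp add: Bochner_Integration.integral_sum Bochner_Integration.integrable_sum KI)
  also have "\<dots> = (\<Sum>i\<in>UNIV. \<Sum>j\<in>UNIV. (\<integral>x. c i j (vv k x) * H $ i $ j \<partial>M))"
    by simp
  also have "\<dots> = (\<integral>x. (\<Sum>i\<in>UNIV. \<Sum>j\<in>UNIV. c i j (vv k x) * H $ i $ j) \<partial>M)"
    by (simp add: Bochner_Integration.integral_sum Bochner_Integration.integrable_sum intc)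
  also have "\<dots> = (\<integral>x. (norm (gg (vv k x)))^2 \<partial>M)"
  proof (rule Bochner_Integration.integral_cong[OF refl])
    fix x
    have "(\<Sum>i\<in>UNIV. \<Sum>j\<in>UNIV. c i j (vv k x) * H $ i $ j) = gg (vv k x) \<bullet> (H *v vv k x)"
      by (simp add: c_def inner_vec_def matrix_vector_mult_def sum_distrib_left mult_ac)
    also have "\<dots> = (norm (gg (vv k x)))^2" using gg_H vv_unit_orth by blast
    finally show "(\<Sum>i\<in>UNIV. \<Sum>j\<in>UNIV. c i j (vv k x) * H $ i $ j) = (norm (gg (vv k x)))^2" .
  qed
  finally show ?thesis using intZ by simp
qed

end

context ojaprob begin

definition "cu = (2 + real (card {1..<kbar})) * G1"
definition "KK = 4 * spec_norm H * cu^2"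

lemma u_bound:
  assumes x: "x \<in> space M"
  shows "norm (Qm (vv k x) *v (Hs (W k x) *v vv k x)) \<le> cu"
proof -
  have u: "norm (vv k x) = 1" using vv_unit_orth by blast
  have w: "W k x \<in> space S" using measurable_space[OF W_meas x] .
  have "norm (Qm (vv k x) *v (Hs (W k x) *v vv k x)) \<le> (2 + real (card {1..<kbar})) * norm (Hs (W k x) *v vv k x)"
    by (rule Qm_bound[OF u])
  also have "\<dots> \<le> (2 + real (card {1..<kbar})) * G1"
  proof (rule mult_left_mono)
    show "norm (Hs (W k x) *v vv k x) \<le> G1" using mv_bound[of "Hs (W k x)" "vv k x"] u Hs_bdd[OF w] by simp
  qed simp
  finally show ?thesis unfolding cu_def .
qed

lemma vv_Suc: "vv (Suc k) x = oja_step (\<alpha> k) vs kbar (Hs (W k x)) (vv k x)"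
  by (simp add: vv_def)

lemma pw_ff:
  assumes x: "x \<in> space M"
  shows "ff (vv (Suc k) x) \<le> ff (vv k x) - 2 * \<alpha> k * Z k x + KK * (\<alpha> k)^2"
proof -
  have u: "norm (vv k x) = 1" "orth (vv k x)" using vv_unit_orth by blast+
  have a: "\<alpha> k \<ge> 0" using \<alpha>_pos[of k] by simp
  note sf = step_facts[OF u a, of "Hs (W k x)"]
  have ub: "(norm (Qm (vv k x) *v (Hs (W k x) *v vv k x)))^2 \<le> cu^2"
    using u_bound[OF x] by (intro power_mono) auto
  have "4 * spec_norm H * (\<alpha> k)^2 * (norm (Qm (vv k x) *v (Hs (W k x) *v vv k x)))^2 \<le> 4 * spec_norm H * (\<alpha> k)^2 * cu^2"
    using ub by (intro mult_left_mono) (auto simp: spec_norm_nonneg)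
  then show ?thesis using sf(4) unfolding sf(5) vv_Suc Z_def KK_def by (simp add: mult_ac)
qed

lemma pw_step:
  assumes x: "x \<in> space M"
  shows "norm (vv (Suc k) x - vv k x) \<le> (2 * cu + 1) * \<alpha> k"
proof -
  have u: "norm (vv k x) = 1" "orth (vv k x)" using vv_unit_orth by blast+
  have a: "\<alpha> k \<ge> 0" using \<alpha>_pos[of k] by simp
  note sf = step_facts[OF u a, of "Hs (W k x)"]
  have "norm (vv (Suc k) x - vv k x) \<le> 2 * \<alpha> k * norm (Qm (vv k x) *v (Hs (W k x) *v vv k x))"
    using sf(3) unfolding vv_Suc .
  also have "\<dots> \<le> 2 * \<alpha> k * cu" using u_bound[OF x] a by (intro mult_left_mono) auto
  also have "\<dots> \<le> (2 * cu + 1) * \<alpha> k" using a by (simp add: algebra_simps)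
  finally show ?thesis .
qed

lemma ff_meas[measurable]: "(\<lambda>x. ff (vv k x)) \<in> borel_measurable M" by measurable

lemma ff_vv_bound: "\<bar>ff (vv k x)\<bar> \<le> spec_norm H"
  using ff_bound[of "vv k x"] vv_unit_orth[of k x] by simp

lemma ff_int: "integrable M (\<lambda>x. ff (vv k x))"
  by (rule bint[where B="spec_norm H"]) (use ff_vv_bound in auto)

lemma ff_E_bound: "\<bar>\<integral>x. ff (vv k x) \<partial>M\<bar> \<le> spec_norm H"
proof -
  have "\<bar>\<integral>x. ff (vv k x) \<partial>M\<bar> \<le> (\<integral>x. \<bar>ff (vv k x)\<bar> \<partial>M)" by (rule integral_abs_bound)
  also have "\<dots> \<le> (\<integral>x. spec_norm H \<partial>M)"
    by (intro integral_mono ff_int[THEN integrable_abs]) (use ff_vv_bound in auto)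
  finally show ?thesis by (simp add: M.prob_space)
qed

lemma g2_meas[measurable]: "(\<lambda>x. (norm (gg (vv k x)))^2) \<in> borel_measurable M" by measurable

lemma g2_int: "integrable M (\<lambda>x. (norm (gg (vv k x)))^2)"
proof (rule bint[where B="(2 * spec_norm H)^2"])
  fix x
  have "norm (gg (vv k x)) \<le> 2 * spec_norm H" using gg_bound vv_unit_orth by blast
  then have "(norm (gg (vv k x)))^2 \<le> (2 * spec_norm H)^2" by (intro power_mono) auto
  then show "\<bar>(norm (gg (vv k x)))^2\<bar> \<le> (2 * spec_norm H)^2" by simp
qed simp

lemma E_step: "2 * \<alpha> k * (\<integral>x. (norm (gg (vv k x)))^2 \<partial>M)
   \<le> (\<integral>x. ff (vv k x) \<partial>M) - (\<integral>x. ff (vv (Suc k) x) \<partial>M) + KK * (\<alpha> k)^2"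
proof -
  have iZ: "integrable M (Z k)" using EZ by blast
  have "(\<integral>x. ff (vv (Suc k) x) \<partial>M) \<le> (\<integral>x. ff (vv k x) - 2 * \<alpha> k * Z k x + KK * (\<alpha> k)^2 \<partial>M)"
    by (intro integral_mono_AE ff_int AE_I2 pw_ff) (use iZ ff_int in auto)
  also have "\<dots> = (\<integral>x. ff (vv k x) \<partial>M) - 2 * \<alpha> k * (\<integral>x. Z k x \<partial>M) + KK * (\<alpha> k)^2"
    using iZ ff_int by (simp add: M.prob_space)
  finally show ?thesis using EZ by simp
qed

end

context ojaprob begin

lemma KK_nonneg: "KK \<ge> 0" unfolding KK_def by (simp add: spec_norm_nonneg)

lemma sum_bound:
  assumes sq: "summable (\<lambda>n. (\<alpha> n)^2)"
  shows "(\<Sum>k<N. \<alpha> k * (\<integral>x. (norm (gg (vv k x)))^2 \<partial>M)) \<le> spec_norm H + KK / 2 * (\<Sum>n. (\<alpha> n)^2)"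
proof -
  define E where "E k = (\<integral>x. ff (vv k x) \<partial>M)" for k
  have "2 * (\<Sum>k<N. \<alpha> k * (\<integral>x. (norm (gg (vv k x)))^2 \<partial>M))
      = (\<Sum>k<N. 2 * \<alpha> k * (\<integral>x. (norm (gg (vv k x)))^2 \<partial>M))" by (simp add: sum_distrib_left mult_ac)
  also have "\<dots> \<le> (\<Sum>k<N. (E k - E (Suc k)) + KK * (\<alpha> k)^2)"
    by (intro sum_mono) (use E_step in \<open>simp add: E_def\<close>)
  also have "\<dots> = (E 0 - E N) + KK * (\<Sum>k<N. (\<alpha> k)^2)"
    by (simp add: sum.distrib sum_lessThan_telescope' sum_distrib_left)
  also have "\<dots> \<le> 2 * spec_norm H + KK * (\<Sum>n. (\<alpha> n)^2)"
  proof (rule add_mono)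
    show "E 0 - E N \<le> 2 * spec_norm H" using ff_E_bound[of 0] ff_E_bound[of N] unfolding E_def by linarith
    show "KK * (\<Sum>k<N. (\<alpha> k)^2) \<le> KK * (\<Sum>n. (\<alpha> n)^2)"
      by (intro mult_left_mono sum_le_suminf sq KK_nonneg) auto
  qed
  finally show ?thesis by (simp add: field_simps)
qed

lemma AE_summ:
  assumes sq: "summable (\<lambda>n. (\<alpha> n)^2)"
  shows "AE x in M. summable (\<lambda>k. \<alpha> k * (norm (gg (vv k x)))^2)"
proof -
  define s where "s k x = \<alpha> k * (norm (gg (vv k x)))^2" for k x
  define e where "e k = (\<integral>x. s k x \<partial>M)" for k
  have s_meas[measurable]: "s k \<in> borel_measurable M" for k unfolding s_def[abs_def] by measurable
  have s_nn: "s k x \<ge> 0" for k x using \<alpha>_pos[of k] by (simp add: s_def)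
  have s_int: "integrable M (s k)" for k unfolding s_def using g2_int by simp
  have e_eq: "e k = \<alpha> k * (\<integral>x. (norm (gg (vv k x)))^2 \<partial>M)" for k unfolding e_def s_def by simp
  have e_nn: "e k \<ge> 0" for k unfolding e_def by (intro integral_nonneg_AE AE_I2 s_nn)
  have "summable e"
    by (rule summableI_nonneg_bounded[OF e_nn]) (use sum_bound[OF sq] in \<open>simp add: e_eq\<close>)
  have "(\<integral>\<^sup>+x. (\<Sum>k. ennreal (s k x)) \<partial>M) = (\<Sum>k. \<integral>\<^sup>+x. ennreal (s k x) \<partial>M)"
    by (rule nn_integral_suminf) measurable
  also have "\<dots> = (\<Sum>k. ennreal (e k))"
    unfolding e_def by (intro suminf_cong nn_integral_eq_integral s_int AE_I2 s_nn)
  also have "\<dots> = ennreal (\<Sum>k. e k)" by (rule suminf_ennreal2[OF e_nn \<open>summable e\<close>])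
  finally have fin: "(\<integral>\<^sup>+x. (\<Sum>k. ennreal (s k x)) \<partial>M) \<noteq> \<infinity>" by simp
  have "AE x in M. (\<Sum>k. ennreal (s k x)) \<noteq> \<infinity>"
    by (rule nn_integral_PInf_AE[OF _ fin]) measurable
  then show ?thesis
  proof (rule AE_mp, intro AE_I2 impI)
    fix x assume "(\<Sum>k. ennreal (s k x)) \<noteq> \<infinity>"
    then have "summable (\<lambda>k. s k x)" by (intro summable_suminf_not_top s_nn) auto
    then show "summable (\<lambda>k. \<alpha> k * (norm (gg (vv k x)))^2)" by (simp add: s_def)
  qed
qed

end

context ojaprob begin

lemma gg_cont: "isCont gg l"
proof -
  have hc: "isCont (\<lambda>v. H *v v) l" by (rule linear_continuous_at[OF matrix_vector_mul_bounded_linear])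
  show ?thesis unfolding gg_def[abs_def] ff_def by (intro continuous_intros hc)
qed

lemma final:
  assumes sq: "summable (\<lambda>n. (\<alpha> n)^2)" and div: "\<not> summable \<alpha>"
  shows "AE x in M. \<forall>vinf.
           limit_point (oja_iter \<alpha> vs kbar v0 (\<lambda>n. Hs (W n x))) vinf \<and>
           vinf \<notin> span (vs ` {1..<kbar})
           \<longrightarrow> vinf \<noteq> 0 \<and> (\<exists>\<mu>. H *v vinf = \<mu> *\<^sub>R vinf)"
  using AE_summ[OF sq]
proof (rule AE_mp, intro AE_I2 impI allI, elim conjE)
  fix x vinf
  assume x: "x \<in> space M" and sm: "summable (\<lambda>k. \<alpha> k * (norm (gg (vv k x)))^2)"
    and lp0: "limit_point (oja_iter \<alpha> vs kbar v0 (\<lambda>n. Hs (W n x))) vinf"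
  have eqv: "oja_iter \<alpha> vs kbar v0 (\<lambda>n. Hs (W n x)) = (\<lambda>n. vv n x)" by (simp add: fun_eq_iff vv_def)
  have lp: "limit_point (\<lambda>n. vv n x) vinf" using lp0 unfolding eqv .
  have cu0: "cu \<ge> 0" unfolding cu_def using G1_nonneg by simp
  have "gg vinf = 0"
  proof (rule det_limit[of "\<lambda>n. vv n x" "2 * cu + 1" \<alpha> gg vinf])
    show "\<And>n. norm (vv (Suc n) x - vv n x) \<le> (2 * cu + 1) * \<alpha> n" by (rule pw_step[OF x])
    show "0 < 2 * cu + 1" using cu0 by simp
    show "\<And>n. 0 \<le> \<alpha> n" using \<alpha>_pos less_imp_le by blast
  qed (use div sm gg_cont lp in auto)
  then have ev: "H *v vinf = ff vinf *\<^sub>R vinf" unfolding gg_def by simp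
  obtain r where r: "strict_mono r" "((\<lambda>n. vv n x) \<circ> r) \<longlonglongrightarrow> vinf" using lp unfolding limit_point_def by blast
  have "(\<lambda>j. norm (vv (r j) x)) \<longlonglongrightarrow> norm vinf" using tendsto_norm[OF r(2)] by (simp add: o_def)
  moreover have "(\<lambda>j. norm (vv (r j) x)) = (\<lambda>j. 1)" using vv_unit_orth by (simp add: fun_eq_iff)
  ultimately have "norm vinf = 1" using LIMSEQ_unique tendsto_const by metis
  then show "vinf \<noteq> 0 \<and> (\<exists>\<mu>. H *v vinf = \<mu> *\<^sub>R vinf)" using ev by auto
qed

end
theorem proposition4p11:
  fixes M :: "'a measure" and S :: "'w measure"
    and H :: "real^'d^'d" and Hs :: "'w \<Rightarrow> real^'d^'d"
    and W :: "nat \<Rightarrow> 'a \<Rightarrow> 'w"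
    and \<sigma> G1 :: real and \<alpha> :: "nat \<Rightarrow> real"
    and kbar :: nat and vs :: "nat \<Rightarrow> real^'d" and lam :: "nat \<Rightarrow> real"
    and v0 :: "real^'d"
  assumes M: "prob_space M" and S: "prob_space S"
    and H_sym: "transpose H = H"
    and Hs_meas: "Hs \<in> borel_measurable S"
    and Hs_sym: "\<And>w. w \<in> space S \<Longrightarrow> transpose (Hs w) = Hs w"
    and Hs_mean: "has_bochner_integral S Hs H"
    and Hs_var: "integrable S (\<lambda>w. (spec_norm (Hs w))\<^sup>2)"
              "(\<integral>w. (spec_norm (Hs w))\<^sup>2 \<partial>S) \<le> \<sigma>\<^sup>2"
    and Hs_bdd: "\<And>w. w \<in> space S \<Longrightarrow> spec_norm (Hs w) \<le> G1"
    and W_meas: "\<And>n. W n \<in> measurable M S"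
    and W_distr: "\<And>n. distr M S (W n) = S"
    and W_indep: "prob_space.indep_vars M (\<lambda>_. S) W UNIV"
    and \<alpha>_pos: "\<And>n. \<alpha> n > 0"
    and \<alpha>_div: "\<not> summable \<alpha>"
    and \<alpha>_sq: "summable (\<lambda>n. (\<alpha> n)\<^sup>2)"
    and kbar: "2 \<le> kbar" "kbar \<le> CARD('d)"
    and vs_orth: "\<And>i j. i \<in> {1..<kbar} \<Longrightarrow> j \<in> {1..<kbar} \<Longrightarrow>
                     vs i \<bullet> vs j = (if i = j then 1 else 0)"
    and vs_eig: "\<And>i. i \<in> {1..<kbar} \<Longrightarrow> H *v vs i = lam i *\<^sub>R vs i"
    and v0_unit: "norm v0 = 1"
    and v0_orth: "\<And>i. i \<in> {1..<kbar} \<Longrightarrow> v0 \<bullet> vs i = 0"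
  shows "AE x in M. \<forall>vinf.
           limit_point (oja_iter \<alpha> vs kbar v0 (\<lambda>n. Hs (W n x))) vinf \<and>
           vinf \<notin> span (vs ` {1..<kbar})
           \<longrightarrow> vinf \<noteq> 0 \<and> (\<exists>\<mu>. H *v vinf = \<mu> *\<^sub>R vinf)"
  proof -
  have "ojaprob H vs kbar lam M S Hs W G1 \<alpha> v0"
    unfolding ojaprob_def ojaprob_axioms_def ojactx_def
    using assms by auto
  then interpret ojaprob H vs kbar lam M S Hs W G1 \<alpha> v0 .
  show ?thesis by (rule final[OF \<alpha>_sq \<alpha>_div])
qed

end
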